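(* Let $\rho_1,\rho_2,k_1,k_2,L>0$, $0<\alpha<1$ and $\eta\ge 0$, and let $\mathcal{A}$ be the operator on $\mathcal{H}$ described in the context. For every $\lambda\in\mathbb{R}$, $i\lambda$ is not an eigenvalue of $\mathcal{A}$.
   Context: Set $\mu(\xi)=|\xi|^{(2\alpha-1)/2}$ for $\xi\in\mathbb{R}$ and $\mathfrak{C}=\pi^{-1}\sin(\alpha\pi)$. All function spaces are complex. Let $\mathbb{H}^1_0=\{(u,v)\in H^1(-L,0)\times H^1(0,L):\ u(-L)=v(L)=0,\ u(0)=v(0)\}$, $\mathbb{L}^2=L^2(-L,0)\times L^2(0,L)$, and $\mathcal{H}=\mathbb{H}^1_0\times\mathbb{L}^2\times L^2(\mathbb{R};\mathbb{L}^2)$, whose elements are written $\mathbb{U}=(u,v,U,V,\varphi_1,\varphi_2)$ with $(u,v)\in\mathbb{H}^1_0$, $(U,V)\in\mathbb{L}^2$, $\varphi_1\in L^2(\mathbb{R};L^2(-L,0))$, $\varphi_2\in L^2(\mathbb{R};L^2(0,L))$ (functions of $(x,\xi)$). $\mathcal{H}$ is a Hilbert space with inner product $\langle\mathbb{U},\tilde{\mathbb{U}}\rangle_{\mathcal H}=\rho_1\int_{-L}^0U\overline{\tilde U}dx+\rho_2\int_0^LV\overline{\tilde V}dx+k_1\int_{-L}^0u_x\overline{\tilde u_x}dx+k_2\int_0^Lv_x\overline{\tilde v_x}dx+\mathfrak{C}\int_{\mathbb R}\int_{-L}^0\varphi_1\overline{\tilde\varphi_1}\,dx\,d\xi+\mathfrak{C}\int_{\mathbb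 R}\int_0^L\varphi_2\overline{\tilde\varphi_2}\,dx\,d\xi$. The domain $\mathcal{D}(\mathcal{A})$ is the set of $\mathbb{U}=(u,v,U,V,\varphi_1,\varphi_2)\in\mathcal{H}$ such that $(U,V)\in\mathbb{H}^1_0$, $u\in H^2(-L,0)$, $v\in H^2(0,L)$, $k_1u_x(0)=k_2v_x(0)$, $|\xi|\varphi_1\in L^2(\mathbb{R};L^2(-L,0))$, $-(|\xi|^2+\eta)\varphi_1+\mu(\xi)U\in L^2(\mathbb{R};L^2(-L,0))$, $|\xi|\varphi_2\in L^2(\mathbb{R};L^2(0,L))$, $-(|\xi|^2+\eta)\varphi_2+\mu(\xi)V\in L^2(\mathbb{R};L^2(0,L))$; and $$\mathcal{A}\mathbb{U}=\Big(U,\ V,\ \tfrac{1}{\rho_1}\big[k_1u_{xx}-\mathfrak{C}\textstyle\int_{\mathbb R}\mu(\xi)\varphi_1(\cdot,\xi)d\xi\big],\ \tfrac{1}{\rho_2}\big[k_2v_{xx}-\mathfrak{C}\textstyle\int_{\mathbb R}\mu(\xi)\varphi_2(\cdot,\xi)d\xi\big],\ -(|\xi|^2+\eta)\varphi_1+\mu(\xi)U,\ -(|\xi|^2+\eta)\varphi_2+\mu(\xi)V\Big).$$ *)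

theory Defs
  imports "HOL-Analysis.Analysis"
begin

definition mu :: "real \<Rightarrow> real \<Rightarrow> real" where
  "mu \<alpha> \<xi> = \<bar>\<xi>\<bar> powr ((2 * \<alpha> - 1) / 2)"

definition Cfrak :: "real \<Rightarrow> real" where
  "Cfrak \<alpha> = sin (\<alpha> * pi) / pi"

definition L2_on :: "real set \<Rightarrow> (real \<Rightarrow> complex) \<Rightarrow> bool" where
  "L2_on S f \<longleftrightarrow> set_borel_measurable lborel S f \<and>
     set_integrable lborel S (\<lambda>x. (norm (f x))\<^sup>2)"

definition L2_strip :: "real \<Rightarrow> real \<Rightarrow> (real \<Rightarrow> real \<Rightarrow> complex) \<Rightarrow> bool" where
  "L2_strip a b \<phi> \<longleftrightarrow>
     set_borel_measurable lborel ({a<..<b} \<times> UNIV) (\<lambda>(x,\<xi>). \<phi> x \<xi>) \<and>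
     set_integrable lborel ({a<..<b} \<times> UNIV) (\<lambda>(x,\<xi>). (norm (\<phi> x \<xi>))\<^sup>2)"

text \<open>u (a continuous representative on [a,b]) belongs to H^1(a,b) with weak derivative g:
  u is the antiderivative of the L^2 function g.\<close>
definition weak_deriv_on :: "real \<Rightarrow> real \<Rightarrow> (real \<Rightarrow> complex) \<Rightarrow> (real \<Rightarrow> complex) \<Rightarrow> bool" where
  "weak_deriv_on a b u g \<longleftrightarrow> L2_on {a<..<b} g \<and>
     (\<forall>x\<in>{a..b}. u x = u a + (LINT t:{a..x}|lborel. g t))"

definition H1_on :: "real \<Rightarrow> real \<Rightarrow> (real \<Rightarrow> complex) \<Rightarrow> bool" where
  "H1_on a b u \<longleftrightarrow> (\<exists>g. weak_deriv_on a b u g)"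

definition H10 :: "real \<Rightarrow> (real \<Rightarrow> complex) \<Rightarrow> (real \<Rightarrow> complex) \<Rightarrow> bool" where
  "H10 L u v \<longleftrightarrow> H1_on (-L) 0 u \<and> H1_on 0 L v \<and> u (-L) = 0 \<and> v L = 0 \<and> u 0 = v 0"

definition in_H :: "real \<Rightarrow> (real \<Rightarrow> complex) \<Rightarrow> (real \<Rightarrow> complex) \<Rightarrow> (real \<Rightarrow> complex) \<Rightarrow>
    (real \<Rightarrow> complex) \<Rightarrow> (real \<Rightarrow> real \<Rightarrow> complex) \<Rightarrow> (real \<Rightarrow> real \<Rightarrow> complex) \<Rightarrow> bool" where
  "in_H L u v U V \<phi>1 \<phi>2 \<longleftrightarrow> H10 L u v \<and> L2_on {-L<..<0} U \<and> L2_on {0<..<L} V \<and>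
     L2_strip (-L) 0 \<phi>1 \<and> L2_strip 0 L \<phi>2"

text \<open>Being the zero element of H (u, v are continuous representatives).\<close>
definition is_zero_H :: "real \<Rightarrow> (real \<Rightarrow> complex) \<Rightarrow> (real \<Rightarrow> complex) \<Rightarrow> (real \<Rightarrow> complex) \<Rightarrow>
    (real \<Rightarrow> complex) \<Rightarrow> (real \<Rightarrow> real \<Rightarrow> complex) \<Rightarrow> (real \<Rightarrow> real \<Rightarrow> complex) \<Rightarrow> bool" where
  "is_zero_H L u v U V \<phi>1 \<phi>2 \<longleftrightarrow>
     (\<forall>x\<in>{-L..0}. u x = 0) \<and> (\<forall>x\<in>{0..L}. v x = 0) \<and>
     (AE x in lborel. x \<in> {-L<..<0} \<longrightarrow> U x = 0) \<and>
     (AE x in lborel. x \<in> {0<..<L} \<longrightarrow> V x = 0) \<and>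
     (AE p in lborel. fst p \<in> {-L<..<0} \<longrightarrow> \<phi>1 (fst p) (snd p) = 0) \<and>
     (AE p in lborel. fst p \<in> {0<..<L} \<longrightarrow> \<phi>2 (fst p) (snd p) = 0)"

text \<open>The derivatives u_x, u_xx, v_x, v_xx are given by ux, uxx, vx, vxx
  (continuous representatives for ux, vx, since u in H^2).\<close>
definition is_eigenvalue_A :: "real \<Rightarrow> real \<Rightarrow> real \<Rightarrow> real \<Rightarrow> real \<Rightarrow> real \<Rightarrow> real \<Rightarrow> complex \<Rightarrow> bool" where
  "is_eigenvalue_A \<rho>1 \<rho>2 k1 k2 L \<alpha> \<eta> z \<longleftrightarrow>
    (\<exists>u v U V \<phi>1 \<phi>2 ux uxx vx vxx.
       \<comment> \<open>element of H\<close>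
       in_H L u v U V \<phi>1 \<phi>2 \<and>
       \<comment> \<open>domain D(A)\<close>
       H10 L U V \<and>
       weak_deriv_on (-L) 0 u ux \<and> weak_deriv_on (-L) 0 ux uxx \<and>
       weak_deriv_on 0 L v vx \<and> weak_deriv_on 0 L vx vxx \<and>
       k1 * ux 0 = k2 * vx 0 \<and>
       L2_strip (-L) 0 (\<lambda>x \<xi>. of_real \<bar>\<xi>\<bar> * \<phi>1 x \<xi>) \<and>
       L2_strip (-L) 0 (\<lambda>x \<xi>. - of_real (\<bar>\<xi>\<bar>\<^sup>2 + \<eta>) * \<phi>1 x \<xi> + of_real (mu \<alpha> \<xi>) * U x) \<and>
       L2_strip 0 L (\<lambda>x \<xi>. of_real \<bar>\<xi>\<bar> * \<phi>2 x \<xi>) \<and>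
       L2_strip 0 L (\<lambda>x \<xi>. - of_real (\<bar>\<xi>\<bar>\<^sup>2 + \<eta>) * \<phi>2 x \<xi> + of_real (mu \<alpha> \<xi>) * V x) \<and>
       \<comment> \<open>nonzero\<close>
       \<not> is_zero_H L u v U V \<phi>1 \<phi>2 \<and>
       \<comment> \<open>A U = z U, componentwise\<close>
       (\<forall>x\<in>{-L..0}. U x = z * u x) \<and>
       (\<forall>x\<in>{0..L}. V x = z * v x) \<and>
       (AE x in lborel. x \<in> {-L<..<0} \<longrightarrow>
          (of_real k1 * uxx x - of_real (Cfrak \<alpha>) * (LINT \<xi>|lborel. of_real (mu \<alpha> \<xi>) * \<phi>1 x \<xi>))
            / of_real \<rho>1 = z * U x) \<and>
       (AE x in lborel. x \<in> {0<..<L} \<longrightarrow>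
          (of_real k2 * vxx x - of_real (Cfrak \<alpha>) * (LINT \<xi>|lborel. of_real (mu \<alpha> \<xi>) * \<phi>2 x \<xi>))
            / of_real \<rho>2 = z * V x) \<and>
       (AE p in lborel. fst p \<in> {-L<..<0} \<longrightarrow>
          - of_real ((snd p)\<^sup>2 + \<eta>) * \<phi>1 (fst p) (snd p) + of_real (mu \<alpha> (snd p)) * U (fst p)
            = z * \<phi>1 (fst p) (snd p)) \<and>
       (AE p in lborel. fst p \<in> {0<..<L} \<longrightarrow>
          - of_real ((snd p)\<^sup>2 + \<eta>) * \<phi>2 (fst p) (snd p) + of_real (mu \<alpha> (snd p)) * V (fst p)
            = z * \<phi>2 (fst p) (snd p)))"

end

theory Submission
  imports Defs
begin

lemma le_one_plus_sq: "(0::real) \<le> n \<Longrightarrow> n \<le> 1 + n\<^sup>2"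
proof (cases "n \<le> 1")
  case False
  then have "n \<le> n * n" by (simp add: mult_le_cancel_left1)
  then show ?thesis by (simp add: power2_eq_square)
qed (simp add: add_increasing2)

lemma L2_set_integrable:
  assumes "L2_on {a<..<b} g"
  shows "set_integrable lborel {a<..<b} g"
proof -
  let ?S = "{a<..<b::real}"
  have m: "(\<lambda>x. indicator ?S x *\<^sub>R g x) \<in> borel_measurable lborel"
    using assms unfolding L2_on_def set_borel_measurable_def by auto
  have i2: "integrable lborel (\<lambda>x. indicator ?S x *\<^sub>R (norm (g x))\<^sup>2)"
    using assms unfolding L2_on_def set_integrable_def by auto
  have i1: "integrable lborel (\<lambda>x. indicator ?S x *\<^sub>R (1::real))"
  proof -
    have "emeasure lborel ?S < \<infinity>"
    proof (cases "a \<le> b")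
      case True then show ?thesis by simp
    next
      case False then have "?S = {}" by auto
      then show ?thesis by simp
    qed
    then show ?thesis using integrable_real_indicator[of ?S lborel] by simp
  qed
  have "integrable lborel (\<lambda>x. indicator ?S x *\<^sub>R (1::real) + indicator ?S x *\<^sub>R (norm (g x))\<^sup>2)"
    using i1 i2 by (rule Bochner_Integration.integrable_add)
  then show ?thesis unfolding set_integrable_def
  proof (rule Bochner_Integration.integrable_bound)
    show "(\<lambda>x. indicator ?S x *\<^sub>R g x) \<in> borel_measurable lborel" by (rule m)
    show "AE x in lborel. norm (indicator ?S x *\<^sub>R g x) \<le> norm (indicator ?S x *\<^sub>R (1::real) + indicator ?S x *\<^sub>R (norm (g x))\<^sup>2)"
    proof (rule AE_I2)
      fix x
      have "norm (g x) \<le> 1 + (norm (g x))\<^sup>2"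
        using le_one_plus_sq[of "norm (g x)"] by simp
      then show "norm (indicator ?S x *\<^sub>R g x) \<le> norm (indicator ?S x *\<^sub>R (1::real) + indicator ?S x *\<^sub>R (norm (g x))\<^sup>2)"
        by (auto simp: indicator_def)
    qed
  qed
qed

lemma set_integrable_Icc_from_Ioo:
  fixes g :: "real \<Rightarrow> complex"
  assumes "set_integrable lborel {a<..<b} g" "a \<le> x" "x \<le> b"
  shows "set_integrable lborel {a..x} g" "(LINT t:{a..x}|lborel. g t) = (LINT t:{a<..<x}|lborel. g t)"
proof -
  have i: "set_integrable lborel {a<..<x} g"
    by (rule set_integrable_subset[OF assms(1)]) (use assms in auto)
  have eq: "(\<lambda>t. indicator {a<..<x} t *\<^sub>R g t) y = (\<lambda>t. indicator {a..x} t *\<^sub>R g t) y" if "y \<notin> {a,x}" for y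
    using that by (auto simp: indicator_def)
  show "set_integrable lborel {a..x} g"
    unfolding set_integrable_def
    by (rule iffD1[OF integrable_discrete_difference[where X="{a,x}" and f="\<lambda>t. indicator {a<..<x} t *\<^sub>R g t" and g="\<lambda>t. indicator {a..x} t *\<^sub>R g t"]])
       (use eq i[unfolded set_integrable_def] in auto)
  show "(LINT t:{a..x}|lborel. g t) = (LINT t:{a<..<x}|lborel. g t)"
    unfolding set_lebesgue_integral_def
    by (rule integral_discrete_difference[where X="{a,x}"]) (auto simp: indicator_def)
qed

lemma weak_deriv_HK:
  assumes "weak_deriv_on a b u g" "a \<le> b"
  shows "g integrable_on {a..b}" "\<And>x. x \<in> {a..b} \<Longrightarrow> u x = u a + integral {a..x} g"
    "continuous_on {a..b} u"
proof -
  have si: "set_integrable lborel {a<..<b} g"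
    using assms L2_set_integrable unfolding weak_deriv_on_def by blast
  have *: "set_integrable lborel {a..x} g" if "x \<in> {a..b}" for x
    by (rule set_integrable_Icc_from_Ioo(1)[OF si]) (use that in simp_all)
  have bb: "b \<in> {a..b}" using assms(2) by simp
  show gi: "g integrable_on {a..b}"
    by (rule set_borel_integral_eq_integral(1)[OF *[OF bb]])
  show eq: "u x = u a + integral {a..x} g" if "x \<in> {a..b}" for x
  proof -
    have "u x = u a + (LINT t:{a..x}|lborel. g t)" using assms(1) that unfolding weak_deriv_on_def by blast
    then show ?thesis using set_borel_integral_eq_integral(2)[OF *[OF that]] by simp
  qed
  have "continuous_on {a..b} (\<lambda>x. u a + integral {a..x} g)"
    by (rule continuous_on_add[OF continuous_on_const indefinite_integral_continuous_1[OF gi]])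
  then show "continuous_on {a..b} u"
    by (rule continuous_on_eq) (rule eq[symmetric], assumption)
qed

lemma AE_lborel_negligible:
  assumes "AE x in lborel. P (x::real)"
  obtains S where "negligible S" "\<And>x. x \<notin> S \<Longrightarrow> P x"
proof -
  obtain N where N: "{x \<in> space lborel. \<not> P x} \<subseteq> N" "emeasure lborel N = 0" "N \<in> sets lborel"
    using assms by (rule AE_E)
  then have "N \<in> null_sets lborel" by auto
  then have "N \<in> null_sets lebesgue" by (rule null_sets_completionI)
  then have "negligible N" by (simp add: negligible_iff_null_sets)
  moreover have "\<And>x. x \<notin> N \<Longrightarrow> P x" using N(1) by auto
  ultimately show ?thesis using that by blast
qed

lemma side_ode:
  fixes u ux uxx :: "real \<Rightarrow> complex" and c :: complex and k :: real
  assumes ab: "a < b" and wu: "weak_deriv_on a b u ux" and wux: "weak_deriv_on a b ux uxx"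
    and k: "k \<noteq> 0"
    and eq: "AE x in lborel. x \<in> {a<..<b} \<longrightarrow> of_real k * uxx x = c * u x"
  shows "continuous_on {a..b} u" "continuous_on {a..b} ux"
    "\<And>x. x \<in> {a..b} \<Longrightarrow> (u has_vector_derivative ux x) (at x within {a..b})"
    "\<And>x. x \<in> {a..b} \<Longrightarrow> (ux has_vector_derivative (c / of_real k * u x)) (at x within {a..b})"
proof -
  note U = weak_deriv_HK[OF wu less_imp_le[OF ab]]
  note UX = weak_deriv_HK[OF wux less_imp_le[OF ab]]
  show cu: "continuous_on {a..b} u" by (rule U(3))
  show cux: "continuous_on {a..b} ux" by (rule UX(3))
  show "(u has_vector_derivative ux x) (at x within {a..b})" if x: "x \<in> {a..b}" for x
  proof (rule has_vector_derivative_transform[OF x])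
    show "u y = u a + integral {a..y} ux" if "y \<in> {a..b}" for y using U(2)[OF that] .
    show "((\<lambda>y. u a + integral {a..y} ux) has_vector_derivative ux x) (at x within {a..b})"
      using has_vector_derivative_add[OF has_vector_derivative_const integral_has_vector_derivative[OF cux x]] by simp
  qed
  obtain S where S: "negligible S" "\<And>x. x \<notin> S \<Longrightarrow> x \<in> {a<..<b} \<longrightarrow> of_real k * uxx x = c * u x"
    using AE_lborel_negligible[OF eq] by blast
  have ieq: "integral {a..y} uxx = integral {a..y} (\<lambda>t. c / of_real k * u t)" if "y \<in> {a..b}" for y
  proof (rule integral_spike[of "S \<union> {a,b}"])
    show "negligible (S \<union> {a, b})" using S(1) by (simp add: negligible_Un)
    fix t assume t: "t \<in> {a..y} - (S \<union> {a, b})"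
    then have "t \<in> {a<..<b}" using that by auto
    then have "of_real k * uxx t = c * u t" using S(2) t by auto
    then show "c / of_real k * u t = uxx t" using k by (simp add: field_simps)
  qed
  have cu2: "continuous_on {a..b} (\<lambda>t. c / of_real k * u t)" by (intro continuous_intros cu)
  show "(ux has_vector_derivative (c / of_real k * u x)) (at x within {a..b})" if x: "x \<in> {a..b}" for x
  proof (rule has_vector_derivative_transform[OF x])
    show "ux y = ux a + integral {a..y} (\<lambda>t. c / of_real k * u t)" if "y \<in> {a..b}" for y
      using UX(2)[OF that] ieq[OF that] by simp
    show "((\<lambda>y. ux a + integral {a..y} (\<lambda>t. c / of_real k * u t)) has_vector_derivative (c / of_real k * u x)) (at x within {a..b})"
      using has_vector_derivative_add[OF has_vector_derivative_const integral_has_vector_derivative[OF cu2 x]] by simp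
  qed
qed

lemma side_energy:
  fixes u ux uxx :: "real \<Rightarrow> complex" and c :: complex and k :: real
  assumes ab: "a < b" and wu: "weak_deriv_on a b u ux" and wux: "weak_deriv_on a b ux uxx"
    and k: "k \<noteq> 0"
    and eq: "AE x in lborel. x \<in> {a<..<b} \<longrightarrow> of_real k * uxx x = c * u x"
  shows "c * of_real (integral {a..b} (\<lambda>x. (cmod (u x))\<^sup>2)) + of_real (k * integral {a..b} (\<lambda>x. (cmod (ux x))\<^sup>2))
     = of_real k * (ux b * cnj (u b) - ux a * cnj (u a))"
proof -
  note S = side_ode[OF ab wu wux k eq]
  have F: "((\<lambda>x. (c / of_real k * u x) * cnj (u x) + ux x * cnj (ux x)) has_integral (ux b * cnj (u b) - ux a * cnj (u a))) {a..b}"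
  proof (rule fundamental_theorem_of_calculus)
    show "a \<le> b" using ab by simp
    fix x assume x: "x \<in> {a..b}"
    show "((\<lambda>x. ux x * cnj (u x)) has_vector_derivative (c / of_real k * u x) * cnj (u x) + ux x * cnj (ux x)) (at x within {a..b})"
      using has_vector_derivative_mult[OF S(4)[OF x] has_vector_derivative_cnj[OF S(3)[OF x]]]
      by (simp add: algebra_simps)
  qed
  have e1: "\<And>z. z * cnj z = complex_of_real ((cmod z)\<^sup>2)" by (rule complex_norm_square[symmetric])
  have cu: "continuous_on {a..b} (\<lambda>x. (cmod (u x))\<^sup>2)" by (intro continuous_intros S(1))
  have cux: "continuous_on {a..b} (\<lambda>x. (cmod (ux x))\<^sup>2)" by (intro continuous_intros S(2))
  have Iu: "((\<lambda>x. (cmod (u x))\<^sup>2) has_integral integral {a..b} (\<lambda>x. (cmod (u x))\<^sup>2)) {a..b}"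
    using cu integrable_continuous_interval by blast
  have Iux: "((\<lambda>x. (cmod (ux x))\<^sup>2) has_integral integral {a..b} (\<lambda>x. (cmod (ux x))\<^sup>2)) {a..b}"
    using cux integrable_continuous_interval by blast
  have G: "((\<lambda>x. (c / of_real k) * of_real ((cmod (u x))\<^sup>2) + of_real ((cmod (ux x))\<^sup>2)) has_integral
      ((c / of_real k) * of_real (integral {a..b} (\<lambda>x. (cmod (u x))\<^sup>2)) + of_real (integral {a..b} (\<lambda>x. (cmod (ux x))\<^sup>2)))) {a..b}"
    by (intro has_integral_add has_integral_mult_right has_integral_of_real Iu Iux)
  have "(c / of_real k) * of_real (integral {a..b} (\<lambda>x. (cmod (u x))\<^sup>2)) + of_real (integral {a..b} (\<lambda>x. (cmod (ux x))\<^sup>2))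
      = ux b * cnj (u b) - ux a * cnj (u a)"
    using has_integral_unique[OF G F[unfolded mult.assoc e1]] .
  then show ?thesis using k by (simp add: field_simps)
qed

lemma int_zero_imp_zero:
  fixes f :: "real \<Rightarrow> complex"
  assumes "a < b" "continuous_on {a..b} f" "integral {a..b} (\<lambda>x. (cmod (f x))\<^sup>2) = 0" "x \<in> {a..b}"
  shows "f x = 0"
proof -
  have c: "continuous_on (cbox a b) (\<lambda>x. (cmod (f x))\<^sup>2)"
    unfolding box_real by (intro continuous_intros assms(2))
  have bx: "box a b \<noteq> {}" using assms(1) by simp
  have eq: "integral (cbox a b) (\<lambda>x. (cmod (f x))\<^sup>2) = 0 \<longleftrightarrow> (\<forall>x\<in>cbox a b. (cmod (f x))\<^sup>2 = 0)"
    by (rule integral_cbox_eq_0_iff[OF c bx]) simp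
  have "\<forall>x\<in>cbox a b. (cmod (f x))\<^sup>2 = 0"
    using eq assms(3) unfolding box_real by blast
  then have "(cmod (f x))\<^sup>2 = 0" using assms(4) unfolding box_real by blast
  then show ?thesis by simp
qed

lemma int_sq_nonneg:
  fixes f :: "real \<Rightarrow> complex"
  assumes "continuous_on {a..b} f"
  shows "0 \<le> integral {a..b} (\<lambda>x. (cmod (f x))\<^sup>2)"
proof (rule integral_nonneg)
  have "continuous_on {a..b} (\<lambda>x. (cmod (f x))\<^sup>2)" by (intro continuous_intros assms)
  then show "(\<lambda>x. (cmod (f x))\<^sup>2) integrable_on {a..b}" by (rule integrable_continuous_interval)
qed simp

lemma ode_zero:
  fixes u ux uxx v vx vxx :: "real \<Rightarrow> complex" and c1 c2 :: complex and k1 k2 L g :: real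
  assumes L: "L > 0" and k1: "k1 > 0" and k2: "k2 > 0"
    and wu: "weak_deriv_on (-L) 0 u ux" and wux: "weak_deriv_on (-L) 0 ux uxx"
    and wv: "weak_deriv_on 0 L v vx" and wvx: "weak_deriv_on 0 L vx vxx"
    and tr: "of_real k1 * ux 0 = of_real k2 * vx 0" and bu: "u (-L) = 0" and bv: "v L = 0" and uv: "u 0 = v 0"
    and equ: "AE x in lborel. x \<in> {-L<..<0} \<longrightarrow> of_real k1 * uxx x = c1 * u x"
    and eqv: "AE x in lborel. x \<in> {0<..<L} \<longrightarrow> of_real k2 * vxx x = c2 * v x"
    and g1: "Im c1 = g" and g2: "Im c2 = g" and cases: "g \<noteq> 0 \<or> (c1 = 0 \<and> c2 = 0)"
  shows "\<forall>x\<in>{-L..0}. u x = 0" "\<forall>x\<in>{0..L}. v x = 0"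
proof -
  define Nu where "Nu = integral {-L..0} (\<lambda>x. (cmod (u x))\<^sup>2)"
  define Du where "Du = integral {-L..0} (\<lambda>x. (cmod (ux x))\<^sup>2)"
  define Nv where "Nv = integral {0..L} (\<lambda>x. (cmod (v x))\<^sup>2)"
  define Dv where "Dv = integral {0..L} (\<lambda>x. (cmod (vx x))\<^sup>2)"
  have E1: "c1 * of_real Nu + of_real (k1 * Du) = of_real k1 * (ux 0 * cnj (u 0))"
    using side_energy[of "-L" 0 u ux uxx k1 c1] L wu wux k1 equ bu unfolding Nu_def Du_def by simp
  have E2: "c2 * of_real Nv + of_real (k2 * Dv) = - (of_real k2 * (vx 0 * cnj (v 0)))"
    using side_energy[of 0 L v vx vxx k2 c2] L wv wvx k2 eqv bv unfolding Nv_def Dv_def by simp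
  have sum: "c1 * of_real Nu + c2 * of_real Nv + of_real (k1 * Du + k2 * Dv) = 0"
  proof -
    have "of_real k1 * (ux 0 * cnj (u 0)) = (of_real k1 * ux 0) * cnj (u 0)" by (rule mult.assoc[symmetric])
    also have "\<dots> = (of_real k2 * vx 0) * cnj (v 0)" by (simp only: tr uv)
    also have "\<dots> = of_real k2 * (vx 0 * cnj (v 0))" by (rule mult.assoc)
    finally have P: "of_real k1 * (ux 0 * cnj (u 0)) = of_real k2 * (vx 0 * cnj (v 0))" .
    have "c1 * of_real Nu + c2 * of_real Nv + of_real (k1 * Du + k2 * Dv)
      = (c1 * of_real Nu + of_real (k1 * Du)) + (c2 * of_real Nv + of_real (k2 * Dv))"
      by (simp only: of_real_add add_ac)
    also have "\<dots> = of_real k1 * (ux 0 * cnj (u 0)) + - (of_real k2 * (vx 0 * cnj (v 0)))"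
      by (simp only: E1 E2)
    also have "\<dots> = 0" by (simp only: P right_minus)
    finally show ?thesis .
  qed
  have LL: "-L < 0" "0 < L" using L by auto
  note SU = side_ode[OF LL(1) wu wux _ equ] and SV = side_ode[OF LL(2) wv wvx _ eqv]
  have cu: "continuous_on {-L..0} u" "continuous_on {-L..0} ux" using SU(1,2) k1 by auto
  have cv: "continuous_on {0..L} v" "continuous_on {0..L} vx" using SV(1,2) k2 by auto
  have nn: "Nu \<ge> 0" "Nv \<ge> 0" "Du \<ge> 0" "Dv \<ge> 0"
    unfolding Nu_def Nv_def Du_def Dv_def
    using int_sq_nonneg cu cv by blast+
  note HU = weak_deriv_HK[OF wu] and HV = weak_deriv_HK[OF wv]
  show "\<forall>x\<in>{-L..0}. u x = 0" "\<forall>x\<in>{0..L}. v x = 0"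
  proof -
    have "(\<forall>x\<in>{-L..0}. u x = 0) \<and> (\<forall>x\<in>{0..L}. v x = 0)"
    proof (cases "g \<noteq> 0")
      case True
      have "Im (c1 * of_real Nu + c2 * of_real Nv + of_real (k1 * Du + k2 * Dv)) = 0" using sum by simp
      then have "g * (Nu + Nv) = 0" using g1 g2 by (simp add: algebra_simps)
      then have "Nu + Nv = 0" using True by simp
      then have "Nu = 0" "Nv = 0" using nn by linarith+
      then show ?thesis
        using int_zero_imp_zero[OF LL(1) cu(1)] int_zero_imp_zero[OF LL(2) cv(1)]
        unfolding Nu_def Nv_def by blast
    next
      case False
      then have c0: "c1 = 0" "c2 = 0" using cases by blast+
      then have "complex_of_real (k1 * Du + k2 * Dv) = 0" using sum by (simp del: of_real_add of_real_mult)
      then have "k1 * Du + k2 * Dv = 0" by (simp only: of_real_eq_0_iff)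
      moreover have "k1 * Du \<ge> 0" "k2 * Dv \<ge> 0" using k1 k2 nn by simp_all
      ultimately have "k1 * Du = 0" "k2 * Dv = 0" by linarith+
      then have "Du = 0" "Dv = 0" using k1 k2 by simp_all
      then have z1: "\<forall>x\<in>{-L..0}. ux x = 0" "\<forall>x\<in>{0..L}. vx x = 0"
        using int_zero_imp_zero[OF LL(1) cu(2)] int_zero_imp_zero[OF LL(2) cv(2)]
        unfolding Du_def Dv_def by blast+
      have u0: "\<forall>x\<in>{-L..0}. u x = 0"
      proof
        fix x assume x: "x \<in> {-L..0}"
        have "integral {-L..x} ux = integral {-L..x} (\<lambda>_. 0)"
          by (rule integral_cong) (use z1 x in simp)
        then show "u x = 0" using HU(2)[OF LL(1)[THEN less_imp_le] x] bu by simp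
      qed
      have "\<forall>x\<in>{0..L}. v x = 0"
      proof
        fix x assume x: "x \<in> {0..L}"
        have "integral {0..x} vx = integral {0..x} (\<lambda>_. 0)"
          by (rule integral_cong) (use z1 x in simp)
        have "u 0 = 0" using u0 LL by simp
        then show "v x = 0" using HV(2)[OF LL(2)[THEN less_imp_le] x] uv \<open>integral {0..x} vx = _\<close> by simp
      qed
      then show ?thesis using u0 by simp
    qed
    then show "\<forall>x\<in>{-L..0}. u x = 0" "\<forall>x\<in>{0..L}. v x = 0" by blast+
  qed
qed

lemma powr_half_integrable:
  fixes e1 e2 c :: real
  assumes e1: "e1 > -1" and e2: "e2 < -1" and c: "c \<ge> 0"
  shows "set_integrable lborel {0<..} (\<lambda>x. if x \<le> 1 then c * x powr e1 else x powr e2)"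
proof -
  define k where "k = (\<lambda>x::real. if x \<le> 1 then c * x powr e1 else x powr e2)"
  have i1: "(\<lambda>x. x powr e1) integrable_on {0<..1}"
    by (rule integrable_on_powr_from_0'[OF e1]) simp
  have i1': "k integrable_on {0<..1}"
  proof (rule integrable_eq)
    show "(\<lambda>x. c * x powr e1) integrable_on {0<..1}" using integrable_on_cmult_left[OF i1] by simp
    show "c * x powr e1 = k x" if "x \<in> {0<..1}" for x using that unfolding k_def by simp
  qed
  have i2: "(\<lambda>x. x powr e2) integrable_on {1..}"
    using has_integral_powr_to_inf[OF e2 zero_less_one] unfolding integrable_on_def by blast
  have i2': "k integrable_on {1..}"
  proof (rule integrable_spike_finite[of "{1}"])
    show "k x = x powr e2" if "x \<in> {1..} - {1}" for x using that unfolding k_def by simp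
  qed (use i2 in simp_all)
  have "k integrable_on ({0<..1} \<union> {1..})"
    by (rule integrable_Un[OF _ i1' i2']) (rule negligible_subset[of "{1}"], auto)
  moreover have "{0<..1} \<union> {1..} = {0::real<..}" by auto
  ultimately have ik: "k integrable_on {0<..}" by simp
  have "k absolutely_integrable_on {0<..}"
  proof (rule nonnegative_absolutely_integrable_1[OF ik])
    fix x :: real assume x: "x \<in> {0<..}"
    show "0 \<le> k x" unfolding k_def using c by simp
  qed
  then have "integrable lebesgue (\<lambda>x. indicator {0<..} x *\<^sub>R k x)"
    unfolding set_integrable_def .
  moreover have "(\<lambda>x. indicator {0<..} x *\<^sub>R k x) \<in> borel_measurable lborel"
    unfolding k_def by measurable
  ultimately have "integrable lborel (\<lambda>x. indicator {0<..} x *\<^sub>R k x)"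
    using integrable_completion by blast
  then show ?thesis unfolding set_integrable_def k_def .
qed

lemma mu_sq: "(mu \<alpha> \<xi>)\<^sup>2 = \<bar>\<xi>\<bar> powr (2 * \<alpha> - 1)"
proof -
  have "(mu \<alpha> \<xi>)\<^sup>2 = \<bar>\<xi>\<bar> powr ((2 * \<alpha> - 1) / 2) * \<bar>\<xi>\<bar> powr ((2 * \<alpha> - 1) / 2)"
    unfolding mu_def power2_eq_square ..
  also have "\<dots> = \<bar>\<xi>\<bar> powr ((2 * \<alpha> - 1) / 2 + (2 * \<alpha> - 1) / 2)" by (rule powr_add[symmetric])
  also have "(2 * \<alpha> - 1) / 2 + (2 * \<alpha> - 1) / 2 = 2 * \<alpha> - 1" by simp
  finally show ?thesis .
qed

lemma f_bound:
  fixes \<alpha> \<eta> lam \<xi> :: real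
  assumes "\<eta> \<ge> 0" "lam \<noteq> 0" "\<xi> \<noteq> 0"
  shows "cmod (complex_of_real ((mu \<alpha> \<xi>)\<^sup>2) / (\<i> * complex_of_real lam + complex_of_real (\<xi>\<^sup>2 + \<eta>)))
     \<le> (if \<bar>\<xi>\<bar> \<le> 1 then (1 / \<bar>lam\<bar>) * \<bar>\<xi>\<bar> powr (2 * \<alpha> - 1) else \<bar>\<xi>\<bar> powr (2 * \<alpha> - 3))"
proof -
  define d where "d = \<i> * complex_of_real lam + complex_of_real (\<xi>\<^sup>2 + \<eta>)"
  define t where "t = \<bar>\<xi>\<bar>"
  have t: "t > 0" using assms(3) unfolding t_def by simp
  have m: "(mu \<alpha> \<xi>)\<^sup>2 = t powr (2 * \<alpha> - 1)" unfolding t_def by (rule mu_sq)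
  have Re: "Re d = \<xi>\<^sup>2 + \<eta>" and Im: "Im d = lam" unfolding d_def by simp_all
  have c1: "\<bar>lam\<bar> \<le> cmod d" using abs_Im_le_cmod[of d] Im by simp
  have c2: "t\<^sup>2 \<le> cmod d" using abs_Re_le_cmod[of d] Re assms(1) unfolding t_def by simp
  have lp: "\<bar>lam\<bar> > 0" using assms(2) by simp
  have dp: "cmod d > 0" using c1 lp by linarith
  have nf: "cmod (complex_of_real ((mu \<alpha> \<xi>)\<^sup>2) / d) = t powr (2 * \<alpha> - 1) / cmod d"
    using m by (simp add: norm_divide)
  have P: "t powr (2 * \<alpha> - 1) \<ge> 0" by simp
  show ?thesis
  proof (cases "t \<le> 1")
    case True
    have "t powr (2 * \<alpha> - 1) / cmod d \<le> t powr (2 * \<alpha> - 1) / \<bar>lam\<bar>"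
      by (rule divide_left_mono[OF c1 P]) (use lp dp in simp)
    then show ?thesis using True nf unfolding d_def t_def by simp
  next
    case False
    have t2: "t\<^sup>2 > 0" using t by simp
    have "t powr (2 * \<alpha> - 1) / cmod d \<le> t powr (2 * \<alpha> - 1) / t\<^sup>2"
      by (rule divide_left_mono[OF c2 P]) (use t2 dp in simp)
    also have "t powr (2 * \<alpha> - 1) / t\<^sup>2 = t powr (2 * \<alpha> - 1) / t powr 2"
      using t by (simp add: powr_numeral)
    also have "\<dots> = t powr (2 * \<alpha> - 1 - 2)" by (rule powr_diff[symmetric])
    also have "2 * \<alpha> - 1 - 2 = 2 * \<alpha> - 3" by simp
    finally show ?thesis using False nf unfolding d_def t_def by simp
  qed
qed

lemma I_integrable:
  fixes \<alpha> \<eta> lam :: real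
  assumes a0: "0 < \<alpha>" and a1: "\<alpha> < 1" and eta: "\<eta> \<ge> 0" and lam: "lam \<noteq> 0"
  shows "integrable lborel (\<lambda>\<xi>. complex_of_real ((mu \<alpha> \<xi>)\<^sup>2) / (\<i> * complex_of_real lam + complex_of_real (\<xi>\<^sup>2 + \<eta>)))"
proof -
  define K where "K = (\<lambda>x::real. if x \<le> 1 then (1 / \<bar>lam\<bar>) * x powr (2 * \<alpha> - 1) else x powr (2 * \<alpha> - 3))"
  define K0 where "K0 = (\<lambda>x::real. indicator {0<..} x *\<^sub>R K x)"
  have iK0: "integrable lborel K0"
    using powr_half_integrable[of "2 * \<alpha> - 1" "2 * \<alpha> - 3" "1 / \<bar>lam\<bar>"] a0 a1
    unfolding set_integrable_def K0_def K_def by simp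
  have iK0': "integrable lborel (\<lambda>x. K0 (-x))"
    using lborel_integrable_real_affine_iff[of "-1" K0 0] iK0 by simp
  have iG: "integrable lborel (\<lambda>x. K0 x + K0 (-x))"
    by (rule Bochner_Integration.integrable_add[OF iK0 iK0'])
  show ?thesis
  proof (rule Bochner_Integration.integrable_bound[OF iG])
    show "(\<lambda>\<xi>. complex_of_real ((mu \<alpha> \<xi>)\<^sup>2) / (\<i> * complex_of_real lam + complex_of_real (\<xi>\<^sup>2 + \<eta>))) \<in> borel_measurable lborel"
      unfolding mu_def by measurable
    show "AE \<xi> in lborel. cmod (complex_of_real ((mu \<alpha> \<xi>)\<^sup>2) / (\<i> * complex_of_real lam + complex_of_real (\<xi>\<^sup>2 + \<eta>))) \<le> norm (K0 \<xi> + K0 (- \<xi>))"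
    proof (rule AE_I2)
      fix \<xi> :: real
      show "cmod (complex_of_real ((mu \<alpha> \<xi>)\<^sup>2) / (\<i> * complex_of_real lam + complex_of_real (\<xi>\<^sup>2 + \<eta>))) \<le> norm (K0 \<xi> + K0 (- \<xi>))"
      proof (cases "\<xi> = 0")
        case True
        then show ?thesis by (simp add: mu_def)
      next
        case False
        have "K0 \<xi> + K0 (- \<xi>) = K \<bar>\<xi>\<bar>"
          using False unfolding K0_def by (cases "\<xi> > 0") (auto simp: indicator_def)
        moreover have "K \<bar>\<xi>\<bar> \<ge> 0" unfolding K_def by simp
        ultimately show ?thesis using f_bound[OF eta lam False, of \<alpha>] unfolding K_def by simp
      qed
    qed
  qed
qed

lemma AE_lborel_not_False: "\<not> (AE x::real in lborel. False)"
proof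
  assume a: "AE x::real in lborel. False"
  have "{x \<in> space lborel. \<not> False} = (UNIV :: real set)" by simp
  then have "(UNIV :: real set) \<in> null_sets lborel"
    using AE_iff_null[of lborel "\<lambda>x::real. False"] a by simp
  then show False by (simp add: null_sets_def)
qed

lemma I_Re_pos:
  fixes \<alpha> \<eta> lam :: real
  assumes a0: "0 < \<alpha>" and a1: "\<alpha> < 1" and eta: "\<eta> \<ge> 0" and lam: "lam \<noteq> 0"
  shows "Re (LINT \<xi>|lborel. complex_of_real ((mu \<alpha> \<xi>)\<^sup>2) / (\<i> * complex_of_real lam + complex_of_real (\<xi>\<^sup>2 + \<eta>))) > 0"
proof -
  define f where "f = (\<lambda>\<xi>. complex_of_real ((mu \<alpha> \<xi>)\<^sup>2) / (\<i> * complex_of_real lam + complex_of_real (\<xi>\<^sup>2 + \<eta>)))"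
  have int: "integrable lborel f" unfolding f_def by (rule I_integrable[OF a0 a1 eta lam])
  have intR: "integrable lborel (\<lambda>\<xi>. Re (f \<xi>))" using int by (rule integrable_Re)
  have ReI: "Re (integral\<^sup>L lborel f) = integral\<^sup>L lborel (\<lambda>\<xi>. Re (f \<xi>))" by (rule integral_Re[OF int, symmetric])
  have Ref: "Re (f \<xi>) = (mu \<alpha> \<xi>)\<^sup>2 * (\<xi>\<^sup>2 + \<eta>) / ((\<xi>\<^sup>2 + \<eta>)\<^sup>2 + lam\<^sup>2)" for \<xi>
    unfolding f_def by (simp add: Re_divide)
  have nn: "Re (f \<xi>) \<ge> 0" for \<xi>
    unfolding Ref using eta by (intro divide_nonneg_nonneg mult_nonneg_nonneg) simp_all
  have pos: "Re (f \<xi>) > 0" if "\<xi> \<noteq> 0" for \<xi>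
  proof -
    have "(mu \<alpha> \<xi>)\<^sup>2 > 0" unfolding mu_sq using that by simp
    moreover have "\<xi>\<^sup>2 + \<eta> > 0" using that eta by (simp add: add_pos_nonneg)
    moreover have "(\<xi>\<^sup>2 + \<eta>)\<^sup>2 + lam\<^sup>2 > 0" using lam by (simp add: add_nonneg_pos)
    ultimately show ?thesis unfolding Ref by (intro divide_pos_pos mult_pos_pos)
  qed
  have ge: "integral\<^sup>L lborel (\<lambda>\<xi>. Re (f \<xi>)) \<ge> 0" by (rule integral_nonneg_AE) (simp add: nn)
  have ne: "integral\<^sup>L lborel (\<lambda>\<xi>. Re (f \<xi>)) \<noteq> 0"
  proof
    assume "integral\<^sup>L lborel (\<lambda>\<xi>. Re (f \<xi>)) = 0"
    then have "AE \<xi> in lborel. Re (f \<xi>) = 0"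
      using integral_nonneg_eq_0_iff_AE[OF intR] nn by simp
    then have "AE \<xi>::real in lborel. False"
    proof (rule eventually_mono[OF eventually_conj[OF _ AE_lborel_singleton[of 0]]])
      fix \<xi> :: real assume "Re (f \<xi>) = 0 \<and> \<xi> \<noteq> 0"
      then show False using pos by force
    qed
    then show False using AE_lborel_not_False by blast
  qed
  show ?thesis using ReI ge ne unfolding f_def by linarith
qed

lemma AE_prod_sections:
  assumes "AE p in (lborel::(real \<times> real) measure). P (fst p) (snd p)"
  shows "AE x in lborel. AE \<xi> in lborel. P x \<xi>"
proof -
  have "AE p in (lborel \<Otimes>\<^sub>M lborel :: (real \<times> real) measure). P (fst p) (snd p)"
    using assms by (simp only: lborel_prod)
  then show ?thesis using lborel_pair.AE_pair[of "\<lambda>p. P (fst p) (snd p)"] by simp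
qed

lemma AE_snd_nonzero: "AE p in (lborel::(real \<times> real) measure). snd p \<noteq> 0"
proof -
  have "AE p in (lborel \<Otimes>\<^sub>M lborel :: (real \<times> real) measure). snd p \<noteq> 0"
  proof (rule lborel_pair.AE_pair_measure)
    show "{x \<in> space (lborel \<Otimes>\<^sub>M lborel). snd x \<noteq> (0::real)} \<in> sets (lborel \<Otimes>\<^sub>M (lborel::real measure))"
      by measurable
    show "AE x in lborel. AE y in lborel. snd (x::real, y) \<noteq> (0::real)"
      using AE_lborel_singleton[of "0::real"] by simp
  qed
  then show ?thesis by (simp only: lborel_prod)
qed

lemma strip_section_meas:
  assumes "L2_strip a b \<phi>" "x \<in> {a<..<b}"
  shows "(\<lambda>\<xi>. \<phi> x \<xi>) \<in> borel_measurable lborel"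
proof -
  have "(\<lambda>p. indicator ({a<..<b} \<times> UNIV) p *\<^sub>R (case p of (x, \<xi>) \<Rightarrow> \<phi> x \<xi>)) \<in> borel_measurable (lborel :: (real \<times> real) measure)"
    using assms(1) unfolding L2_strip_def set_borel_measurable_def by blast
  then have "(\<lambda>p. indicator ({a<..<b} \<times> UNIV) p *\<^sub>R (case p of (x, \<xi>) \<Rightarrow> \<phi> x \<xi>)) \<in> borel_measurable (lborel \<Otimes>\<^sub>M lborel :: (real \<times> real) measure)"
    by (simp only: lborel_prod)
  then have "(\<lambda>\<xi>. (\<lambda>p. indicator ({a<..<b} \<times> UNIV) p *\<^sub>R (case p of (x, \<xi>) \<Rightarrow> \<phi> x \<xi>)) (x, \<xi>)) \<in> borel_measurable lborel"
    by (rule measurable_Pair2) simp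
  moreover have "(\<lambda>\<xi>. (\<lambda>p. indicator ({a<..<b} \<times> UNIV) p *\<^sub>R (case p of (x, \<xi>) \<Rightarrow> \<phi> x \<xi>)) (x, \<xi>)) = (\<lambda>\<xi>. \<phi> x \<xi>)"
    using assms(2) by (simp add: indicator_def)
  ultimately show ?thesis by simp
qed

lemma d_nonzero:
  fixes \<eta> lam \<xi> :: real
  assumes "\<eta> \<ge> 0" "\<xi> \<noteq> 0"
  shows "\<i> * complex_of_real lam + complex_of_real (\<xi>\<^sup>2 + \<eta>) \<noteq> 0"
proof
  assume "\<i> * complex_of_real lam + complex_of_real (\<xi>\<^sup>2 + \<eta>) = 0"
  then have "Re (\<i> * complex_of_real lam + complex_of_real (\<xi>\<^sup>2 + \<eta>)) = 0" by simp
  then have "\<xi>\<^sup>2 + \<eta> = 0" by simp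
  moreover have "\<xi>\<^sup>2 > 0" using assms(2) by simp
  ultimately show False using assms(1) by linarith
qed

lemma side_J:
  fixes \<phi> :: "real \<Rightarrow> real \<Rightarrow> complex" and U :: "real \<Rightarrow> complex" and \<eta> lam \<alpha> :: real
  assumes meas: "\<And>x. x \<in> S \<Longrightarrow> (\<lambda>\<xi>. \<phi> x \<xi>) \<in> borel_measurable lborel"
    and eta: "\<eta> \<ge> 0"
    and eq: "AE p in lborel. fst p \<in> S \<longrightarrow>
          - of_real ((snd p)\<^sup>2 + \<eta>) * \<phi> (fst p) (snd p) + of_real (mu \<alpha> (snd p)) * U (fst p)
            = (\<i> * complex_of_real lam) * \<phi> (fst p) (snd p)"
  shows "AE x in lborel. x \<in> S \<longrightarrow> (LINT \<xi>|lborel. of_real (mu \<alpha> \<xi>) * \<phi> x \<xi>)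
     = U x * (LINT \<xi>|lborel. complex_of_real ((mu \<alpha> \<xi>)\<^sup>2) / (\<i> * complex_of_real lam + complex_of_real (\<xi>\<^sup>2 + \<eta>)))"
proof -
  have ae: "AE x in lborel. AE \<xi> in lborel. x \<in> S \<longrightarrow>
          - of_real (\<xi>\<^sup>2 + \<eta>) * \<phi> x \<xi> + of_real (mu \<alpha> \<xi>) * U x = (\<i> * complex_of_real lam) * \<phi> x \<xi>"
    using AE_prod_sections[of "\<lambda>x \<xi>. x \<in> S \<longrightarrow>
          - of_real (\<xi>\<^sup>2 + \<eta>) * \<phi> x \<xi> + of_real (mu \<alpha> \<xi>) * U x = (\<i> * complex_of_real lam) * \<phi> x \<xi>"] eq
    by simp
  show ?thesis
  proof (rule eventually_mono[OF ae], rule impI)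
    fix x assume ax: "AE \<xi> in lborel. x \<in> S \<longrightarrow>
          - of_real (\<xi>\<^sup>2 + \<eta>) * \<phi> x \<xi> + of_real (mu \<alpha> \<xi>) * U x = (\<i> * complex_of_real lam) * \<phi> x \<xi>"
      and xS: "x \<in> S"
    have ae2: "AE \<xi> in lborel. of_real (mu \<alpha> \<xi>) * \<phi> x \<xi>
        = U x * (complex_of_real ((mu \<alpha> \<xi>)\<^sup>2) / (\<i> * complex_of_real lam + complex_of_real (\<xi>\<^sup>2 + \<eta>)))"
    proof (rule eventually_mono[OF eventually_conj[OF ax AE_lborel_singleton[of 0]]])
      fix \<xi> :: real
      assume h: "(x \<in> S \<longrightarrow> - of_real (\<xi>\<^sup>2 + \<eta>) * \<phi> x \<xi> + of_real (mu \<alpha> \<xi>) * U x = (\<i> * complex_of_real lam) * \<phi> x \<xi>) \<and> \<xi> \<noteq> 0"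
      define d where "d = \<i> * complex_of_real lam + complex_of_real (\<xi>\<^sup>2 + \<eta>)"
      have dn: "d \<noteq> 0" unfolding d_def using d_nonzero[OF eta] h by blast
      have "d * \<phi> x \<xi> = of_real (mu \<alpha> \<xi>) * U x"
        using h xS unfolding d_def by (simp add: algebra_simps)
      then have "\<phi> x \<xi> = of_real (mu \<alpha> \<xi>) * U x / d" using dn by (simp add: field_simps)
      then show "of_real (mu \<alpha> \<xi>) * \<phi> x \<xi> = U x * (complex_of_real ((mu \<alpha> \<xi>)\<^sup>2) / d)"
        by (simp add: power2_eq_square)
    qed
    have "(LINT \<xi>|lborel. of_real (mu \<alpha> \<xi>) * \<phi> x \<xi>)
       = (LINT \<xi>|lborel. U x * (complex_of_real ((mu \<alpha> \<xi>)\<^sup>2) / (\<i> * complex_of_real lam + complex_of_real (\<xi>\<^sup>2 + \<eta>))))"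
    proof (rule integral_cong_AE)
      show "(\<lambda>\<xi>. complex_of_real (mu \<alpha> \<xi>) * \<phi> x \<xi>) \<in> borel_measurable lborel"
        using meas[OF xS] unfolding mu_def by measurable
      show "(\<lambda>\<xi>. U x * (complex_of_real ((mu \<alpha> \<xi>)\<^sup>2) / (\<i> * complex_of_real lam + complex_of_real (\<xi>\<^sup>2 + \<eta>)))) \<in> borel_measurable lborel"
        unfolding mu_def by measurable
    qed (rule ae2)
    then show "(LINT \<xi>|lborel. of_real (mu \<alpha> \<xi>) * \<phi> x \<xi>)
     = U x * (LINT \<xi>|lborel. complex_of_real ((mu \<alpha> \<xi>)\<^sup>2) / (\<i> * complex_of_real lam + complex_of_real (\<xi>\<^sup>2 + \<eta>)))"
      by (simp only: integral_mult_right_zero)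
  qed
qed

lemma phi_zero:
  fixes \<phi> :: "real \<Rightarrow> real \<Rightarrow> complex" and U :: "real \<Rightarrow> complex" and \<eta> lam \<alpha> :: real
  assumes eta: "\<eta> \<ge> 0" and U0: "\<And>x. x \<in> S \<Longrightarrow> U x = 0"
    and eq: "AE p in lborel. fst p \<in> S \<longrightarrow>
          - of_real ((snd p)\<^sup>2 + \<eta>) * \<phi> (fst p) (snd p) + of_real (mu \<alpha> (snd p)) * U (fst p)
            = (\<i> * complex_of_real lam) * \<phi> (fst p) (snd p)"
  shows "AE p in lborel. fst p \<in> S \<longrightarrow> \<phi> (fst p) (snd p) = 0"
proof (rule eventually_mono[OF eventually_conj[OF eq AE_snd_nonzero]], rule impI)
  fix p :: "real \<times> real"
  assume h: "(fst p \<in> S \<longrightarrow>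
          - of_real ((snd p)\<^sup>2 + \<eta>) * \<phi> (fst p) (snd p) + of_real (mu \<alpha> (snd p)) * U (fst p)
            = (\<i> * complex_of_real lam) * \<phi> (fst p) (snd p)) \<and> snd p \<noteq> 0"
    and s: "fst p \<in> S"
  define d where "d = \<i> * complex_of_real lam + complex_of_real ((snd p)\<^sup>2 + \<eta>)"
  have dn: "d \<noteq> 0" unfolding d_def using d_nonzero[OF eta] h by blast
  have A: "- of_real ((snd p)\<^sup>2 + \<eta>) * \<phi> (fst p) (snd p) = (\<i> * complex_of_real lam) * \<phi> (fst p) (snd p)"
    using h s U0[OF s] by simp
  have "d * \<phi> (fst p) (snd p) = (\<i> * complex_of_real lam) * \<phi> (fst p) (snd p) - (- of_real ((snd p)\<^sup>2 + \<eta>) * \<phi> (fst p) (snd p))"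
    unfolding d_def by (simp add: algebra_simps)
  also have "\<dots> = 0" unfolding A by simp
  finally have "d * \<phi> (fst p) (snd p) = 0" .
  then show "\<phi> (fst p) (snd p) = 0" using dn by simp
qed

lemma Cfrak_pos: "0 < \<alpha> \<Longrightarrow> \<alpha> < 1 \<Longrightarrow> Cfrak \<alpha> > 0"
  unfolding Cfrak_def by (intro divide_pos_pos sin_gt_zero) simp_all

lemma side_eq:
  fixes k \<rho> C :: real and z I a Jv Uv uv :: complex
  assumes r: "\<rho> \<noteq> 0"
    and E: "(of_real k * a - of_real C * Jv) / of_real \<rho> = z * Uv"
    and J: "Jv = Uv * I" and Ux: "Uv = z * uv"
  shows "of_real k * a = z * (of_real \<rho> * z + of_real C * I) * uv"
proof -
  have r': "(of_real \<rho> :: complex) \<noteq> 0" using r by simp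
  have "of_real k * a - of_real C * Jv = of_real \<rho> * (z * Uv)"
    using E r' by (simp add: divide_eq_eq mult.commute)
  then have "of_real k * a = of_real \<rho> * (z * Uv) + of_real C * Jv" by (simp add: diff_eq_eq)
  also have "\<dots> = z * (of_real \<rho> * z + of_real C * I) * uv" unfolding J Ux by (simp add: algebra_simps)
  finally show ?thesis .
qed

theorem corollary4p3:
  fixes \<rho>1 \<rho>2 k1 k2 L \<alpha> \<eta> lam :: real
  assumes "\<rho>1 > 0" "\<rho>2 > 0" "k1 > 0" "k2 > 0" "L > 0"
    and "0 < \<alpha>" "\<alpha> < 1" "\<eta> \<ge> 0"
  shows "\<not> is_eigenvalue_A \<rho>1 \<rho>2 k1 k2 L \<alpha> \<eta> (\<i> * complex_of_real lam)"
proof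
  note r1 = assms(1) and r2 = assms(2) and k1 = assms(3) and k2 = assms(4) and L = assms(5)
    and a0 = assms(6) and a1 = assms(7) and eta = assms(8)
  assume "is_eigenvalue_A \<rho>1 \<rho>2 k1 k2 L \<alpha> \<eta> (\<i> * complex_of_real lam)"
  then obtain u v U V ux uxx vx vxx :: "real \<Rightarrow> complex" and \<phi>1 \<phi>2 :: "real \<Rightarrow> real \<Rightarrow> complex" where
    inH: "in_H L u v U V \<phi>1 \<phi>2" and
    H10UV: "H10 L U V" and
    wu: "weak_deriv_on (-L) 0 u ux" and wux: "weak_deriv_on (-L) 0 ux uxx" and
    wv: "weak_deriv_on 0 L v vx" and wvx: "weak_deriv_on 0 L vx vxx" and
    tr: "complex_of_real k1 * ux 0 = complex_of_real k2 * vx 0" and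
    nz: "\<not> is_zero_H L u v U V \<phi>1 \<phi>2" and
    Uu: "\<forall>x\<in>{-L..0}. U x = (\<i> * complex_of_real lam) * u x" and
    Vv: "\<forall>x\<in>{0..L}. V x = (\<i> * complex_of_real lam) * v x" and
    equ: "AE x in lborel. x \<in> {-L<..<0} \<longrightarrow>
          (of_real k1 * uxx x - of_real (Cfrak \<alpha>) * (LINT \<xi>|lborel. of_real (mu \<alpha> \<xi>) * \<phi>1 x \<xi>))
            / of_real \<rho>1 = (\<i> * complex_of_real lam) * U x" and
    eqv: "AE x in lborel. x \<in> {0<..<L} \<longrightarrow>
          (of_real k2 * vxx x - of_real (Cfrak \<alpha>) * (LINT \<xi>|lborel. of_real (mu \<alpha> \<xi>) * \<phi>2 x \<xi>))
            / of_real \<rho>2 = (\<i> * complex_of_real lam) * V x" and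
    eq1: "AE p in lborel. fst p \<in> {-L<..<0} \<longrightarrow>
          - of_real ((snd p)\<^sup>2 + \<eta>) * \<phi>1 (fst p) (snd p) + of_real (mu \<alpha> (snd p)) * U (fst p)
            = (\<i> * complex_of_real lam) * \<phi>1 (fst p) (snd p)" and
    eq2: "AE p in lborel. fst p \<in> {0<..<L} \<longrightarrow>
          - of_real ((snd p)\<^sup>2 + \<eta>) * \<phi>2 (fst p) (snd p) + of_real (mu \<alpha> (snd p)) * V (fst p)
            = (\<i> * complex_of_real lam) * \<phi>2 (fst p) (snd p)"
    unfolding is_eigenvalue_A_def by blast
  have H10uv: "H10 L u v" and S1: "L2_strip (-L) 0 \<phi>1" and S2: "L2_strip 0 L \<phi>2"
    using inH unfolding in_H_def by blast+
  have bu: "u (-L) = 0" and bv: "v L = 0" and uv: "u 0 = v 0"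
    using H10uv unfolding H10_def by blast+
  define I where "I = (LINT \<xi>|lborel. complex_of_real ((mu \<alpha> \<xi>)\<^sup>2) / (\<i> * complex_of_real lam + complex_of_real (\<xi>\<^sup>2 + \<eta>)))"
  define C where "C = Cfrak \<alpha>"
  define z where "z = \<i> * complex_of_real lam"
  define c1 where "c1 = z * (of_real \<rho>1 * z + of_real C * I)"
  define c2 where "c2 = z * (of_real \<rho>2 * z + of_real C * I)"
  have J1: "AE x in lborel. x \<in> {-L<..<0} \<longrightarrow> (LINT \<xi>|lborel. of_real (mu \<alpha> \<xi>) * \<phi>1 x \<xi>) = U x * I"
    unfolding I_def by (rule side_J[OF strip_section_meas[OF S1] eta eq1])
  have J2: "AE x in lborel. x \<in> {0<..<L} \<longrightarrow> (LINT \<xi>|lborel. of_real (mu \<alpha> \<xi>) * \<phi>2 x \<xi>) = V x * I"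
    unfolding I_def by (rule side_J[OF strip_section_meas[OF S2] eta eq2])
  have equ': "AE x in lborel. x \<in> {-L<..<0} \<longrightarrow> of_real k1 * uxx x = c1 * u x"
  proof (rule eventually_mono[OF eventually_conj[OF equ J1]], rule impI)
    fix x assume h: "(x \<in> {-L<..<0} \<longrightarrow>
          (of_real k1 * uxx x - of_real (Cfrak \<alpha>) * (LINT \<xi>|lborel. of_real (mu \<alpha> \<xi>) * \<phi>1 x \<xi>))
            / of_real \<rho>1 = (\<i> * complex_of_real lam) * U x) \<and>
          (x \<in> {-L<..<0} \<longrightarrow> (LINT \<xi>|lborel. of_real (mu \<alpha> \<xi>) * \<phi>1 x \<xi>) = U x * I)"
      and x: "x \<in> {-L<..<0}"
    have Ux: "U x = z * u x" using Uu x unfolding z_def by simp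
    have E: "(of_real k1 * uxx x - of_real C * (LINT \<xi>|lborel. of_real (mu \<alpha> \<xi>) * \<phi>1 x \<xi>)) / of_real \<rho>1 = z * U x"
      using h x unfolding C_def z_def by blast
    have J: "(LINT \<xi>|lborel. of_real (mu \<alpha> \<xi>) * \<phi>1 x \<xi>) = U x * I" using h x by blast
    have rr: "\<rho>1 \<noteq> 0" using r1 by simp
    show "of_real k1 * uxx x = c1 * u x"
      unfolding c1_def by (rule side_eq[OF rr E J Ux])
  qed
  have eqv': "AE x in lborel. x \<in> {0<..<L} \<longrightarrow> of_real k2 * vxx x = c2 * v x"
  proof (rule eventually_mono[OF eventually_conj[OF eqv J2]], rule impI)
    fix x assume h: "(x \<in> {0<..<L} \<longrightarrow>
          (of_real k2 * vxx x - of_real (Cfrak \<alpha>) * (LINT \<xi>|lborel. of_real (mu \<alpha> \<xi>) * \<phi>2 x \<xi>))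
            / of_real \<rho>2 = (\<i> * complex_of_real lam) * V x) \<and>
          (x \<in> {0<..<L} \<longrightarrow> (LINT \<xi>|lborel. of_real (mu \<alpha> \<xi>) * \<phi>2 x \<xi>) = V x * I)"
      and x: "x \<in> {0<..<L}"
    have Vx: "V x = z * v x" using Vv x unfolding z_def by simp
    have E: "(of_real k2 * vxx x - of_real C * (LINT \<xi>|lborel. of_real (mu \<alpha> \<xi>) * \<phi>2 x \<xi>)) / of_real \<rho>2 = z * V x"
      using h x unfolding C_def z_def by blast
    have J: "(LINT \<xi>|lborel. of_real (mu \<alpha> \<xi>) * \<phi>2 x \<xi>) = V x * I" using h x by blast
    have rr: "\<rho>2 \<noteq> 0" using r2 by simp
    show "of_real k2 * vxx x = c2 * v x"
      unfolding c2_def by (rule side_eq[OF rr E J Vx])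
  qed
  define g where "g = lam * C * Re I"
  have g1: "Im c1 = g" unfolding c1_def g_def z_def by (simp add: algebra_simps)
  have g2: "Im c2 = g" unfolding c2_def g_def z_def by (simp add: algebra_simps)
  have cases: "g \<noteq> 0 \<or> (c1 = 0 \<and> c2 = 0)"
  proof (cases "lam = 0")
    case True
    then show ?thesis unfolding c1_def c2_def z_def by simp
  next
    case False
    have "C > 0" unfolding C_def using Cfrak_pos a0 a1 by blast
    moreover have "Re I > 0" unfolding I_def by (rule I_Re_pos[OF a0 a1 eta False])
    ultimately have "g \<noteq> 0" unfolding g_def using False by simp
    then show ?thesis by blast
  qed
  note tr' = tr
  note Z = ode_zero[OF L k1 k2 wu wux wv wvx tr' bu bv uv equ' eqv' g1 g2 cases]
  have U0: "\<forall>x\<in>{-L..0}. U x = 0" using Z(1) Uu by simp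
  have V0: "\<forall>x\<in>{0..L}. V x = 0" using Z(2) Vv by simp
  have P1: "AE p in lborel. fst p \<in> {-L<..<0} \<longrightarrow> \<phi>1 (fst p) (snd p) = 0"
    by (rule phi_zero[OF eta _ eq1]) (use U0 in simp)
  have P2: "AE p in lborel. fst p \<in> {0<..<L} \<longrightarrow> \<phi>2 (fst p) (snd p) = 0"
    by (rule phi_zero[OF eta _ eq2]) (use V0 in simp)
  have "is_zero_H L u v U V \<phi>1 \<phi>2"
    unfolding is_zero_H_def
  proof (intro conjI)
    show "\<forall>x\<in>{-L..0}. u x = 0" by (rule Z(1))
    show "\<forall>x\<in>{0..L}. v x = 0" by (rule Z(2))
    show "AE x in lborel. x \<in> {-L<..<0} \<longrightarrow> U x = 0" using U0 by (intro AE_I2) simp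
    show "AE x in lborel. x \<in> {0<..<L} \<longrightarrow> V x = 0" using V0 by (intro AE_I2) simp
  qed (rule P1, rule P2)
  then show False using nz by blast
qed

end
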